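(* Let $N\ge1$ and $j\in\{1,\dots,N\}$. For non-negative SNRs define $$h_j=\mathsf{SNR}_{s,j}+\frac{\mathsf{SNR}_{r,j}\,\mathsf{SNR}_{s,r}}{\mathsf{SNR}_{s,j}+\mathsf{SNR}_{r,j}+\mathsf{SNR}_{s,r}+1}.$$ Then for each fixed $\mathsf{SNR}_{s,j}\ge0$, $h_j$ is quasi-concave as a function of $(\mathsf{SNR}_{r,j},\mathsf{SNR}_{s,r})\in[0,\infty)^2$.
   Context: $h_j$ is the effective SNR at destination $j$ of a quantize-forward scheme in a real AWGN multicast relay channel with source $s$, relay $r$, destinations $1,\dots,N$ and link SNRs $\mathsf{SNR}_{u,v}\ge0$. A function $F$ on a convex set is quasi-concave if $F(\lambda x_1+(1-\lambda)x_2)\ge\min(F(x_1),F(x_2))$ for all $x_1,x_2$ and $\lambda\in[0,1]$. *)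

theory Defs
  imports "HOL-Analysis.Analysis"
begin

definition quasi_concave_on :: "('a::real_vector) set \<Rightarrow> ('a \<Rightarrow> real) \<Rightarrow> bool" where
  "quasi_concave_on S F \<longleftrightarrow> convex S \<and>
     (\<forall>x1\<in>S. \<forall>x2\<in>S. \<forall>t::real. 0 \<le> t \<and> t \<le> 1 \<longrightarrow>
        F (t *\<^sub>R x1 + (1 - t) *\<^sub>R x2) \<ge> min (F x1) (F x2))"

definition h_eff :: "real \<Rightarrow> real \<Rightarrow> real \<Rightarrow> real" where
  "h_eff snr_sj snr_rj snr_sr =
     snr_sj + snr_rj * snr_sr / (snr_sj + snr_rj + snr_sr + 1)"

end

theory Submission
  imports Defs
begin

lemma pos_uv:
  fixes u v m Kc :: real
  assumes "m > 0" "u \<ge> -m" "v \<ge> -m" "u* v \<ge> Kc" "Kc > m*m"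
  shows "u > 0 \<and> v > 0"
proof (rule ccontr)
  assume "\<not> (u > 0 \<and> v > 0)"
  hence "u \<le> 0 \<or> v \<le> 0" by auto
  moreover have "u \<le> 0 \<Longrightarrow> v \<le> 0 \<Longrightarrow> u* v \<le> m*m"
  proof -
    assume "u \<le> 0" "v \<le> 0"
    hence "(-u)*(-v) \<le> m*m" using assms by (intro mult_mono) auto
    thus ?thesis by simp
  qed
  moreover have "u \<le> 0 \<Longrightarrow> v > 0 \<Longrightarrow> u* v \<le> 0" by (simp add: mult_nonpos_nonneg)
  moreover have "u > 0 \<Longrightarrow> v \<le> 0 \<Longrightarrow> u* v \<le> 0" by (simp add: mult_nonneg_nonpos)
  moreover have "m*m \<ge> 0" by simp
  ultimately show False using assms by linarith
qed

lemma key: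
  fixes u1 v1 u2 v2 Kc t :: real
  assumes "u1 > 0" "v1 > 0" "u2 > 0" "v2 > 0" "u1* v1 \<ge> Kc" "u2* v2 \<ge> Kc" "Kc > 0"
    "0 \<le> t" "t \<le> 1"
  shows "(t*u1 + (1-t)*u2)*(t* v1+(1-t)* v2) \<ge> Kc"
proof -
  define s where "s = 1 - t"
  have s: "s \<ge> 0" "t + s = 1" using assms s_def by auto
  have "(u1* v2+u2* v1)^2 - 4*Kc*Kc \<ge> (u1* v2+u2* v1)^2 - 4*(u1* v1)*(u2* v2)"
  proof -
    have "Kc*Kc \<le> (u1* v1)*(u2* v2)" using assms by (intro mult_mono) auto
    thus ?thesis by linarith
  qed
  also have "(u1* v2+u2* v1)^2 - 4*(u1* v1)*(u2* v2) = (u1* v2-u2* v1)^2" by algebra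
  finally have f: "(u1* v2-u2* v1)^2 \<le> (u1* v2+u2* v1)^2 - 4*Kc*Kc" .
  have "0 \<le> (u1* v2-u2* v1)^2" by simp
  moreover have "(2*Kc)^2 = 4*Kc*Kc" by (simp add: power2_eq_square)
  ultimately have "(2*Kc)^2 \<le> (u1* v2+u2* v1)^2" using f by linarith
  hence c: "2*Kc \<le> u1* v2+u2* v1" using assms
    by (meson add_pos_pos mult_pos_pos less_le power2_le_imp_le)
  have e: "(t*u1 + s*u2)*(t* v1+s* v2) = t*t*(u1* v1) + s* s*(u2* v2) + t* s*(u1* v2+u2* v1)"
    by algebra
  have "t*t*(u1* v1) \<ge> t*t*Kc" using assms by (simp add: mult_left_mono)
  moreover have "s* s*(u2* v2) \<ge> s* s*Kc" using assms s by (simp add: mult_left_mono)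
  moreover have "t* s*(u1* v2+u2* v1) \<ge> t* s*(2*Kc)" using c assms s by (simp add: mult_left_mono)
  moreover have "t*t*Kc + s* s*Kc + t* s*(2*Kc) = (t+s)^2*Kc" by algebra
  ultimately have "(t*u1 + s*u2)*(t* v1+s* v2) \<ge> Kc" using e s by simp
  thus ?thesis using s_def by simp
qed

lemma ge_iff:
  fixes x y b m :: real
  assumes "x \<ge> 0" "y \<ge> 0" "b > 0"
  shows "m \<le> x*y/(x+y+b) \<longleftrightarrow> m*(x+y+b) \<le> x*y"
  using assms by (simp add: pos_le_divide_eq)

lemma main:
  fixes a x1 y1 x2 y2 t :: real
  assumes "a \<ge> 0" "x1 \<ge> 0" "y1 \<ge> 0" "x2 \<ge> 0" "y2 \<ge> 0" "0 \<le> t" "t \<le> 1"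
  shows "min (h_eff a x1 y1) (h_eff a x2 y2) \<le> h_eff a (t*x1+(1-t)*x2) (t*y1+(1-t)*y2)"
proof -
  define b where "b = a + 1"
  have b: "b > 0" using assms b_def by simp
  define g where "g = (\<lambda>x y::real. x*y/(x+y+b))"
  have h: "\<And>x y. h_eff a x y = a + g x y" unfolding h_eff_def g_def b_def
    by (simp add: add.assoc add.commute add.left_commute)
  define m where "m = min (g x1 y1) (g x2 y2)"
  let ?x = "t*x1+(1-t)*x2" and ?y = "t*y1+(1-t)*y2"
  have px: "?x \<ge> 0" "?y \<ge> 0" using assms by auto
  have "m \<le> g ?x ?y"
  proof (cases "m \<le> 0")
    case True
    have "g ?x ?y \<ge> 0" unfolding g_def using px b by simp
    thus ?thesis using True by linarith
  next
    case False
    hence m: "m > 0" by simp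
    have m1: "m*(x1+y1+b) \<le> x1*y1" using ge_iff[of x1 y1 b m] assms b m_def g_def by simp
    have m2: "m*(x2+y2+b) \<le> x2*y2" using ge_iff[of x2 y2 b m] assms b m_def g_def by simp
    define Kc where "Kc = m*(b+m)"
    have Kgt: "Kc > m*m" using m b unfolding Kc_def by (simp add: algebra_simps)
    have e1: "(x1-m)*(y1-m) \<ge> Kc" using m1 unfolding Kc_def by (simp add: algebra_simps)
    have e2: "(x2-m)*(y2-m) \<ge> Kc" using m2 unfolding Kc_def by (simp add: algebra_simps)
    have p1: "x1 - m > 0 \<and> y1 - m > 0" using pos_uv[OF m _ _ e1 Kgt] assms by simp
    have p2: "x2 - m > 0 \<and> y2 - m > 0" using pos_uv[OF m _ _ e2 Kgt] assms by simp
    have Kp: "Kc > 0" using Kgt m by (smt (verit) mult_pos_pos)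
    have "(t*(x1-m) + (1-t)*(x2-m))*(t*(y1-m)+(1-t)*(y2-m)) \<ge> Kc"
      using key[OF _ _ _ _ e1 e2 Kp assms(6,7)] p1 p2 by simp
    moreover have "t*(x1-m) + (1-t)*(x2-m) = ?x - m" "t*(y1-m)+(1-t)*(y2-m) = ?y - m"
      by algebra+
    ultimately have "(?x - m)*(?y - m) \<ge> Kc" by simp
    hence "m*(?x+?y+b) \<le> ?x*?y" unfolding Kc_def by (simp add: algebra_simps)
    thus ?thesis using ge_iff[OF px b] unfolding g_def by simp
  qed
  thus ?thesis unfolding h m_def by simp
qed

theorem lemma2:
  fixes N j :: nat and snr_sj :: "nat \<Rightarrow> real"
  assumes "N \<ge> 1" and "j \<in> {1..N}" and "snr_sj j \<ge> 0"
  shows "quasi_concave_on {p :: real \<times> real. fst p \<ge> 0 \<and> snd p \<ge> 0}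
           (\<lambda>p. h_eff (snr_sj j) (fst p) (snd p))"
  unfolding quasi_concave_on_def
proof (intro conjI ballI allI impI)
  show "convex {p :: real \<times> real. fst p \<ge> 0 \<and> snd p \<ge> 0}"
    unfolding convex_def by (auto intro!: add_nonneg_nonneg)
next
  fix x1 x2 :: "real \<times> real" and t :: real
  assume "x1 \<in> {p. fst p \<ge> 0 \<and> snd p \<ge> 0}" "x2 \<in> {p. fst p \<ge> 0 \<and> snd p \<ge> 0}"
    "0 \<le> t \<and> t \<le> 1"
  thus "min (h_eff (snr_sj j) (fst x1) (snd x1)) (h_eff (snr_sj j) (fst x2) (snd x2))
        \<le> h_eff (snr_sj j) (fst (t *\<^sub>R x1 + (1 - t) *\<^sub>R x2)) (snd (t *\<^sub>R x1 + (1 - t) *\<^sub>R x2))"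
    using main[OF assms(3)] by simp
qed

end
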